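(* Assume $\mathfrak{c} = 2^{<\mathfrak{c}}$, where $\mathfrak{c}=|\mathbb{R}|$ and $2^{<\mathfrak{c}} = \sup\{2^\lambda : \lambda<\mathfrak{c}\ \text{a cardinal}\}$. Then there is a family $\{ f_\nu : \nu < 2^{\mathfrak{c}} \}$ of two-point selections on $\mathbb{R}$ such that $\mathcal{B}_{f_\mu}(\mathbb{R}) \neq \mathcal{B}_{f_\nu}(\mathbb{R})$ for all distinct $\mu, \nu < 2^{\mathfrak{c}}$.
   Context: For a set $X$, $[X]^2$ is the set of two-element subsets of $X$. A two-point selection on $X$ is a function $f:[X]^2\to X$ with $f(F)\in F$ for all $F\in[X]^2$. For a two-point selection $f$ on $X$ and distinct $r,s\in X$, write $r<_f s$ if $f(\{r,s\})=r$. Put $(\leftarrow,r)_f=\{x\in X: x<_f r\}$ and $(r,\rightarrow)_f=\{x\in X: r<_f x\}$. The topology $\tau_f$ on $X$ is the topology generated (as a subbase) by all sets $(\leftarrow,r)_f$ and $(r,\rightarrow)_f$, $r\in X$. For $X=\mathbb{R}$, $\mathcal{B}_f(\mathbb{R})$ denotes the Borel $\sigma$-algebra of $(\mathbb{R},\tau_f)$, i.e. the $\sigma$-algebra generated by $\tau_f$. *)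

theory Defs
  imports "HOL-Analysis.Analysis" "HOL-Library.Equipollence"
begin

text \<open>A two-point selection on X: a function on two-element subsets choosing a member.
  Represented as a function on all subsets; only its values on two-element subsets of X matter.\<close>
definition two_point_selection :: "'a set \<Rightarrow> ('a set \<Rightarrow> 'a) \<Rightarrow> bool" where
  "two_point_selection X f \<longleftrightarrow> (\<forall>F. F \<subseteq> X \<and> card F = 2 \<longrightarrow> f F \<in> F)"

definition sel_less :: "('a set \<Rightarrow> 'a) \<Rightarrow> 'a \<Rightarrow> 'a \<Rightarrow> bool" where
  "sel_less f r s \<longleftrightarrow> r \<noteq> s \<and> f {r, s} = r"

definition sel_left_ray :: "'a set \<Rightarrow> ('a set \<Rightarrow> 'a) \<Rightarrow> 'a \<Rightarrow> 'a set" where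
  "sel_left_ray X f r = {x \<in> X. sel_less f x r}"

definition sel_right_ray :: "'a set \<Rightarrow> ('a set \<Rightarrow> 'a) \<Rightarrow> 'a \<Rightarrow> 'a set" where
  "sel_right_ray X f r = {x \<in> X. sel_less f r x}"

definition sel_topology :: "'a set \<Rightarrow> ('a set \<Rightarrow> 'a) \<Rightarrow> 'a topology" where
  "sel_topology X f = topology_generated_by
     ((\<Union>r\<in>X. {sel_left_ray X f r, sel_right_ray X f r}) \<union> {X})"

definition sel_borel :: "'a set \<Rightarrow> ('a set \<Rightarrow> 'a) \<Rightarrow> 'a set set" where
  "sel_borel X f = sigma_sets X {U. openin (sel_topology X f) U}"

end

theory Submission
  imports Defs
begin
definition vrep :: "real \<Rightarrow> real" where
  "vrep x = (SOME y. y \<in> {0..1} \<and> x - y \<in> \<rat>)"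

lemma vrep_ex: "vrep x \<in> {0..1} \<and> x - vrep x \<in> \<rat>"
proof -
  have "x - of_int (floor x) \<in> {0..1} \<and> x - (x - of_int (floor x)) \<in> \<rat>"
    by (auto simp: Rats_of_int) linarith
  then show ?thesis unfolding vrep_def by (rule someI)
qed

lemma vrep_eq: assumes "x - y \<in> \<rat>" shows "vrep x = vrep y"
proof -
  have "(\<lambda>z. z \<in> {0..1} \<and> x - z \<in> \<rat>) = (\<lambda>z. z \<in> {0..1} \<and> y - z \<in> \<rat>)"
  proof (intro ext iffI)
    fix z assume "z \<in> {0..1} \<and> x - z \<in> \<rat>"
    then show "z \<in> {0..1} \<and> y - z \<in> \<rat>"
      using Rats_diff[OF _ assms, of "x - z"] by (auto simp: algebra_simps)
  next
    fix z assume "z \<in> {0..1} \<and> y - z \<in> \<rat>"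
    then show "z \<in> {0..1} \<and> x - z \<in> \<rat>"
      using Rats_add[OF assms, of "y - z"] by (auto simp: algebra_simps)
  qed
  then show ?thesis unfolding vrep_def by simp
qed

definition vset :: "real set" where "vset = range vrep"

lemma vset_sub: "vset \<subseteq> {0..1}" using vrep_ex by (auto simp: vset_def)

lemma vset_rep: "v \<in> vset \<Longrightarrow> vrep v = v"
proof -
  assume "v \<in> vset" then obtain a where a: "v = vrep a" by (auto simp: vset_def)
  have "a - vrep a \<in> \<rat>" using vrep_ex by blast
  then have "vrep a - a \<in> \<rat>" by (metis Rats_minus_iff minus_diff_eq)
  then show ?thesis using a vrep_eq by simp
qed

lemma vset_uniq: "v \<in> vset \<Longrightarrow> w \<in> vset \<Longrightarrow> v - w \<in> \<rat> \<Longrightarrow> v = w"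
  using vset_rep vrep_eq by metis

lemma vset_not_borel: "vset \<notin> sets borel"
proof
  assume Vb: "vset \<in> sets borel"
  define I where "I = \<rat> \<inter> {-1..1::real}"
  define W where "W q = {x. x - q \<in> vset}" for q
  have Wb: "W q \<in> sets lborel" for q
  proof -
    have "(\<lambda>x::real. x - q) \<in> borel_measurable borel" by measurable
    then have "(\<lambda>x::real. x - q) -` vset \<inter> space borel \<in> sets borel"
      using Vb by (rule measurable_sets)
    then show ?thesis by (simp add: W_def vimage_def)
  qed
  have Wm: "emeasure lborel (W q) = emeasure lborel vset" for q
  proof -
    have "emeasure lborel vset = emeasure (distr lborel borel ((+) (-q))) vset"
      by (simp add: lborel_distr_plus)
    also have "\<dots> = emeasure lborel ((+) (-q) -` vset \<inter> space lborel)"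
      by (rule emeasure_distr) (auto simp: Vb)
    also have "(+) (-q) -` vset \<inter> space lborel = W q" by (auto simp: W_def)
    finally show ?thesis by simp
  qed
  have cI: "countable I" unfolding I_def using countable_rat by auto
  have iI: "infinite I"
  proof
    assume "finite I"
    moreover have "inj (\<lambda>n::nat. 1 / real (Suc n))" by (auto simp: inj_def)
    moreover have "range (\<lambda>n::nat. 1 / real (Suc n)) \<subseteq> I" by (auto simp: I_def) (smt (verit) divide_nonneg_nonneg of_nat_0_le_iff)
    ultimately show False by (meson finite_imageD finite_subset infinite_UNIV_nat)
  qed
  have disj: "disjoint_family_on W I"
    unfolding disjoint_family_on_def
  proof (intro ballI impI)
    fix p q assume "p \<in> I" "q \<in> I" "p \<noteq> q"
    show "W p \<inter> W q = {}"
    proof (rule ccontr)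
      assume "W p \<inter> W q \<noteq> {}"
      then obtain x where "x - p \<in> vset" "x - q \<in> vset" by (auto simp: W_def)
      moreover have "(x - p) - (x - q) \<in> \<rat>" using \<open>p \<in> I\<close> \<open>q \<in> I\<close> by (auto simp: I_def)
      ultimately have "x - p = x - q" by (rule vset_uniq)
      then show False using \<open>p \<noteq> q\<close> by simp
    qed
  qed
  have U: "emeasure lborel (\<Union>(W ` I)) = (\<integral>\<^sup>+i. emeasure lborel vset \<partial>count_space I)"
    using emeasure_UN_countable[OF _ cI disj, of lborel] Wb Wm by simp
  also have "\<dots> = emeasure lborel vset * \<infinity>"
    using iI by (simp add: nn_integral_const)
  finally have U: "emeasure lborel (\<Union>(W ` I)) = emeasure lborel vset * \<infinity>" .
  have sub1: "{0..1} \<subseteq> \<Union>(W ` I)"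
  proof
    fix x :: real assume x: "x \<in> {0..1}"
    have r: "vrep x \<in> {0..1}" "x - vrep x \<in> \<rat>" using vrep_ex by auto
    then have "x - vrep x \<in> I" using x by (auto simp: I_def)
    moreover have "x \<in> W (x - vrep x)" by (auto simp: W_def vset_def)
    ultimately show "x \<in> \<Union>(W ` I)" by blast
  qed
  have sub2: "\<Union>(W ` I) \<subseteq> {-1..2}"
    using vset_sub by (force simp: W_def I_def)
  have Ub: "\<Union>(W ` I) \<in> sets lborel"
    using Wb cI by (intro sets.countable_UN') auto
  have "emeasure lborel {0..1::real} \<le> emeasure lborel (\<Union>(W ` I))"
    using sub1 Ub by (intro emeasure_mono) auto
  then have l: "1 \<le> emeasure lborel vset * \<infinity>" using U by simp
  have "emeasure lborel (\<Union>(W ` I)) \<le> emeasure lborel {-1..2::real}"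
    using sub2 by (intro emeasure_mono) auto
  then have u: "emeasure lborel vset * \<infinity> \<le> 3" using U by simp
  show False
  proof (cases "emeasure lborel vset = 0")
    case True then show ?thesis using l by simp
  next
    case False then have "emeasure lborel vset * \<infinity> = \<infinity>" by (simp add: ennreal_mult_top)
    then show ?thesis using u by (simp add: top_unique)
  qed
qed

definition Qv :: "real \<Rightarrow> real \<Rightarrow> bool" where
  "Qv x y \<longleftrightarrow> (y = 2 \<and> x \<in> vset) \<or> (x = 2 \<and> y \<notin> vset) \<or> (x \<noteq> 2 \<and> y \<noteq> 2 \<and> x < y)"

definition relp :: "real set \<Rightarrow> real \<times> real \<Rightarrow> real \<times> real \<Rightarrow> bool" where
  "relp A p q \<longleftrightarrow> fst p < fst q \<or> (fst p = fst q \<and> (if fst p \<in> A then Qv (snd p) (snd q) else snd p < snd q))"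

definition rel :: "(real \<times> real \<Rightarrow> real) \<Rightarrow> real set \<Rightarrow> real \<Rightarrow> real \<Rightarrow> bool" where
  "rel h A s t \<longleftrightarrow> relp A (inv h s) (inv h t)"

definition sel :: "(real \<times> real \<Rightarrow> real) \<Rightarrow> real set \<Rightarrow> real set \<Rightarrow> real" where
  "sel h A S = (SOME x. x \<in> S \<and> (\<forall>y\<in>S. y \<noteq> x \<longrightarrow> rel h A x y))"

lemma Qv_tour: "x \<noteq> y \<Longrightarrow> Qv y x \<longleftrightarrow> \<not> Qv x y"
  unfolding Qv_def by auto

lemma relp_tour: assumes "p \<noteq> q" shows "relp A q p \<longleftrightarrow> \<not> relp A p q"
proof -
  obtain a b c d where p: "p = (a,b)" and q: "q = (c,d)" by fastforce
  consider "a < c" | "c < a" | "a = c" "b \<noteq> d" using assms p q by fastforce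
  then show ?thesis
  proof cases
    case 3
    have "Qv d b \<longleftrightarrow> \<not> Qv b d" using Qv_tour[OF 3(2)] .
    then show ?thesis using 3 p q unfolding relp_def by auto
  qed (auto simp: p q relp_def)
qed

lemma rel_tour: "bij h \<Longrightarrow> s \<noteq> t \<Longrightarrow> rel h A t s \<longleftrightarrow> \<not> rel h A s t"
proof -
  assume h: "bij h" and st: "s \<noteq> t"
  have "inv h s \<noteq> inv h t" using h st by (metis bij_inv_eq_iff)
  then show ?thesis unfolding rel_def by (rule relp_tour)
qed

lemma rel_h: "bij h \<Longrightarrow> rel h A (h p) (h q) = relp A p q"
  unfolding rel_def by (simp add: bij_is_inj)

lemma sel_pair: assumes h: "bij h" and st: "s \<noteq> t"
  shows "sel h A {s,t} = s \<longleftrightarrow> rel h A s t"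
proof
  assume e: "sel h A {s,t} = s"
  show "rel h A s t"
  proof (rule ccontr)
    assume n: "\<not> rel h A s t"
    then have "rel h A t s" using rel_tour[OF h st] by simp
    then have P: "t \<in> {s,t} \<and> (\<forall>y\<in>{s,t}. y \<noteq> t \<longrightarrow> rel h A t y)" by auto
    have "sel h A {s,t} \<in> {s,t} \<and> (\<forall>y\<in>{s,t}. y \<noteq> sel h A {s,t} \<longrightarrow> rel h A (sel h A {s,t}) y)"
      unfolding sel_def by (rule someI, rule P)
    then show False using e n st by auto
  qed
next
  assume r: "rel h A s t"
  then have P: "s \<in> {s,t} \<and> (\<forall>y\<in>{s,t}. y \<noteq> s \<longrightarrow> rel h A s y)" by auto
  have Q: "sel h A {s,t} \<in> {s,t} \<and> (\<forall>y\<in>{s,t}. y \<noteq> sel h A {s,t} \<longrightarrow> rel h A (sel h A {s,t}) y)"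
    unfolding sel_def by (rule someI, rule P)
  show "sel h A {s,t} = s"
  proof (rule ccontr)
    assume "sel h A {s,t} \<noteq> s"
    then have "sel h A {s,t} = t" using Q by auto
    then have "rel h A t s" using Q st by auto
    then show False using r rel_tour[OF h st] by simp
  qed
qed

lemma sel_tps: "bij h \<Longrightarrow> two_point_selection UNIV (sel h A)"
  unfolding two_point_selection_def
proof (intro allI impI)
  fix F :: "real set" assume h: "bij h" and "F \<subseteq> UNIV \<and> card F = 2"
  then obtain s t where F: "F = {s,t}" "s \<noteq> t" by (meson card_2_iff)
  show "sel h A F \<in> F"
    using sel_pair[OF h F(2), of A] rel_tour[OF h F(2), of A] sel_pair[OF h F(2)[symmetric], of A] F
    by (cases "rel h A s t") (auto simp: insert_commute)
qed

lemma sel_less_eq: "bij h \<Longrightarrow> sel_less (sel h A) r s \<longleftrightarrow> r \<noteq> s \<and> rel h A r s"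
  unfolding sel_less_def using sel_pair by blast

lemma cont:
  assumes h: "bij h" and iA: "i \<notin> A"
    and U: "openin (sel_topology UNIV (sel h A)) U"
  shows "open ((\<lambda>x. h (i,x)) -` U)"
proof -
  have "generate_topology_on ((\<Union>r\<in>UNIV. {sel_left_ray UNIV (sel h A) r, sel_right_ray UNIV (sel h A) r}) \<union> {UNIV}) U"
    using U unfolding sel_topology_def by (simp add: openin_topology_generated_by_iff)
  then show ?thesis
  proof (induction rule: generate_topology_on.induct)
    case Empty then show ?case by simp
  next
    case (Int a b) then show ?case by (simp add: open_Int vimage_Int)
  next
    case (UN K) then show ?case by (auto simp: vimage_Union intro!: open_Union)
  next
    case (Basis s)
    then consider "s = UNIV" | r where "s = sel_left_ray UNIV (sel h A) r"
      | r where "s = sel_right_ray UNIV (sel h A) r" by blast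
    then show ?case
    proof cases
      case 1 then show ?thesis by simp
    next
      case 2
      obtain j y where r: "r = h (j,y)" using h by (metis bij_pointE surj_pair)
      have "(\<lambda>x. h (i,x)) -` s = {x. (i,x) \<noteq> (j,y) \<and> relp A (i,x) (j,y)}"
        using 2 r h by (auto simp: sel_left_ray_def sel_less_eq rel_h bij_is_inj inj_eq)
      also have "\<dots> = (if i < j then UNIV else if i = j then {..<y} else {})"
        using iA by (auto simp: relp_def)
      finally show ?thesis by simp
    next
      case 3
      obtain j y where r: "r = h (j,y)" using h by (metis bij_pointE surj_pair)
      have "(\<lambda>x. h (i,x)) -` s = {x. (j,y) \<noteq> (i,x) \<and> relp A (j,y) (i,x)}"
        using 3 r h by (auto simp: sel_right_ray_def sel_less_eq rel_h bij_is_inj inj_eq)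
      also have "\<dots> = (if j < i then UNIV else if i = j then {y<..} else {})"
        using iA by (auto simp: relp_def)
      finally show ?thesis by simp
    qed
  qed
qed

lemma meas:
  assumes h: "bij h" and iA: "i \<notin> A"
    and S: "S \<in> sel_borel UNIV (sel h A)"
  shows "(\<lambda>x. h (i,x)) -` S \<in> sets borel"
  using S unfolding sel_borel_def
proof (induction rule: sigma_sets.induct)
  case (Basic a) then show ?case using cont[OF h iA] by auto
next
  case Empty then show ?case by simp
next
  case (Compl a) then show ?case by (simp add: vimage_Diff sets.compl_sets)
next
  case (Union a) then show ?case by (simp add: vimage_UN)
qed

lemma ray_in:
  assumes h: "bij h" and iA: "i \<in> A"
  shows "sel_left_ray UNIV (sel h A) (h (i,2)) \<in> sel_borel UNIV (sel h A)"
    and "(\<lambda>x. h (i,x)) -` sel_left_ray UNIV (sel h A) (h (i,2)) = vset"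
proof -
  have "openin (sel_topology UNIV (sel h A)) (sel_left_ray UNIV (sel h A) (h (i,2)))"
    unfolding sel_topology_def openin_topology_generated_by_iff
    by (rule generate_topology_on.Basis) blast
  then show "sel_left_ray UNIV (sel h A) (h (i,2)) \<in> sel_borel UNIV (sel h A)"
    unfolding sel_borel_def by (auto intro: sigma_sets.Basic)
  have "(\<lambda>x. h (i,x)) -` sel_left_ray UNIV (sel h A) (h (i,2)) = {x. (i,x) \<noteq> (i,2) \<and> relp A (i,x) (i,2)}"
    using h by (auto simp: sel_left_ray_def sel_less_eq rel_h bij_is_inj inj_eq)
  also have "\<dots> = vset"
    using iA vset_sub by (auto simp: relp_def Qv_def)
  finally show "(\<lambda>x. h (i,x)) -` sel_left_ray UNIV (sel h A) (h (i,2)) = vset" .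
qed

lemma distinct_borel:
  assumes h: "bij h" and iA: "i \<in> A" and iB: "i \<notin> B"
  shows "sel_borel UNIV (sel h A) \<noteq> sel_borel UNIV (sel h B)"
proof
  assume e: "sel_borel UNIV (sel h A) = sel_borel UNIV (sel h B)"
  have "sel_left_ray UNIV (sel h A) (h (i,2)) \<in> sel_borel UNIV (sel h B)"
    using ray_in(1)[OF h iA] e by simp
  from meas[OF h iB this] show False using ray_in(2)[OF h iA] vset_not_borel by simp
qed

theorem theorem3p6:
  assumes "\<forall>S :: real set. S \<prec> (UNIV :: real set) \<longrightarrow> Pow S \<lesssim> (UNIV :: real set)"
  shows "\<exists>F :: real set \<Rightarrow> (real set \<Rightarrow> real).
           (\<forall>A. two_point_selection (UNIV :: real set) (F A)) \<and>
           (\<forall>A B. A \<noteq> B \<longrightarrow> sel_borel UNIV (F A) \<noteq> sel_borel UNIV (F B))"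
proof -
  have "infinite (UNIV :: real set)" by (rule infinite_UNIV_char_0)
  then obtain h :: "real \<times> real \<Rightarrow> real" where "bij_betw h (UNIV \<times> UNIV) UNIV"
    using card_of_ordIso[THEN iffD2, OF card_of_Times_same_infinite] by blast
  then have h: "bij h" by simp
  show ?thesis
  proof (intro exI[of _ "sel h"] conjI allI impI)
    fix A show "two_point_selection UNIV (sel h A)" by (rule sel_tps[OF h])
  next
    fix A B :: "real set" assume "A \<noteq> B"
    then obtain i where "(i \<in> A \<and> i \<notin> B) \<or> (i \<in> B \<and> i \<notin> A)" by blast
    then show "sel_borel UNIV (sel h A) \<noteq> sel_borel UNIV (sel h B)"
      using distinct_borel[OF h] by metis
  qed
qed


end
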